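(* Let $f:\mathbb{R}^n\to\mathbb{R}$ satisfy: (A1) $f\in C^\infty(\mathbb{R}^n)$; (A2) there is $M>0$ such that $f(x)>0$ for all $x\notin B(0,M)$; (A3) $\nabla f(p)\neq 0$ for every $p\in\mathcal{B}:=\{p\in\mathbb{R}^n: f(p)=0\}$, and assume $\mathcal{B}\neq\emptyset$. For $x\in\mathbb{R}^n$ let $d(x)=\min_{p\in\mathcal{B}}\|x-p\|$ and for $\sigma>0$ let $\Omega_\sigma=\{x\in\mathbb{R}^n: d(x)<\sigma\}$. Then for each angle $\alpha\in\left(-\frac{\pi}{4},\frac{\pi}{4}\right)$ there exists $\sigma>0$ such that for every $x\in\Omega_\sigma$ we have $\nabla f(x)\neq 0$, the set \[T(x)=\Big\{t\ge 0:\ x-t\,\mathrm{sgn}(f(x))\,\frac{\nabla f(x)}{\|\nabla f(x)\|}\in\mathcal{B}\Big\}\] is nonempty, and its smallest element $t(x)=\min T(x)$ satisfies \[ d(x)\le t(x)\le 2\cos(\alpha)\,d(x).\]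
   Context: $\|\cdot\|$ is the Euclidean norm, $B(x,r)$ is the open Euclidean ball of center $x$ and radius $r$, and $\mathrm{sgn}$ is the sign function (with $\mathrm{sgn}(0)=0$). Under (A1)–(A3), $\mathcal{B}$ is a compact smooth hypersurface of $\mathbb{R}^n$, so the minimum defining $d(x)$ is attained. *)

theory Defs
  imports "HOL-Analysis.Analysis"
begin

definition smooth_fun :: "('a::euclidean_space \<Rightarrow> real) \<Rightarrow> bool" where
  "smooth_fun f \<longleftrightarrow> (\<exists>D :: 'a list \<Rightarrow> 'a \<Rightarrow> real.
     D [] = f \<and> (\<forall>vs x. (D vs has_derivative (\<lambda>v. D (v # vs) x)) (at x)))"

definition grad :: "('a::euclidean_space \<Rightarrow> real) \<Rightarrow> 'a \<Rightarrow> 'a" where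
  "grad f x = (\<Sum>i\<in>Basis. frechet_derivative f (at x) i *\<^sub>R i)"

definition zero_set :: "('a::euclidean_space \<Rightarrow> real) \<Rightarrow> 'a set" where
  "zero_set f = {p. f p = 0}"

text \<open>Distance to the zero set (the minimum is attained under the hypotheses).\<close>
definition dist_B :: "('a::euclidean_space \<Rightarrow> real) \<Rightarrow> 'a \<Rightarrow> real" where
  "dist_B f x = infdist x (zero_set f)"

definition Omega :: "('a::euclidean_space \<Rightarrow> real) \<Rightarrow> real \<Rightarrow> 'a set" where
  "Omega f \<sigma> = {x. dist_B f x < \<sigma>}"

definition Tset :: "('a::euclidean_space \<Rightarrow> real) \<Rightarrow> 'a \<Rightarrow> real set" where
  "Tset f x = {t. t \<ge> 0 \<and>
     x - (t * sgn (f x)) *\<^sub>R ((1 / norm (grad f x)) *\<^sub>R grad f x) \<in> zero_set f}"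

end

theory Submission imports Defs begin

lemma grad_props:
  fixes f :: "'a::euclidean_space \<Rightarrow> real"
  assumes "smooth_fun f"
  shows "\<And>x. (f has_derivative (\<lambda>v. grad f x \<bullet> v)) (at x)" "continuous_on UNIV (grad f)"
proof -
  obtain D :: "'a list \<Rightarrow> 'a \<Rightarrow> real" where D0: "D [] = f" and
    Dd: "\<And>vs x. (D vs has_derivative (\<lambda>v. D (v # vs) x)) (at x)"
    using assms unfolding smooth_fun_def by blast
  have fd: "(f has_derivative (\<lambda>v. D [v] x)) (at x)" for x using Dd[of "[]"] D0 by simp
  have g: "grad f x = (\<Sum>i\<in>Basis. D [i] x *\<^sub>R i)" for x
    unfolding grad_def using frechet_derivative_at[OF fd[of x]] by (metis (no_types))
  show "(f has_derivative (\<lambda>v. grad f x \<bullet> v)) (at x)" for x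
  proof -
    have lin: "linear (\<lambda>v. D [v] x)" using has_derivative_linear[OF fd] .
    have "D [v] x = grad f x \<bullet> v" for v
    proof -
      have "D [v] x = D [(\<Sum>i\<in>Basis. (v \<bullet> i) *\<^sub>R i)] x" by (simp add: euclidean_representation)
      also have "\<dots> = (\<Sum>i\<in>Basis. (v \<bullet> i) * D [i] x)"
        by (simp add: linear_sum[OF lin] linear_scale[OF lin])
      also have "\<dots> = grad f x \<bullet> v" unfolding g
        by (simp add: inner_sum_left inner_sum_right mult.commute inner_commute)
      finally show ?thesis .
    qed
    then show ?thesis using fd[of x] by simp
  qed
  have "continuous_on UNIV (\<lambda>x. D [i] x)" for i
    using Dd[of "[i]"] by (meson continuous_at_imp_continuous_on has_derivative_continuous)
  then show "continuous_on UNIV (grad f)" unfolding g[abs_def]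
    by (intro continuous_intros) auto
qed

lemma lin_est:
  fixes f :: "'a::euclidean_space \<Rightarrow> real"
  assumes der: "\<And>y. (f has_derivative (\<lambda>v. G y \<bullet> v)) (at y)"
    and bnd: "\<And>y. y \<in> cball x r \<Longrightarrow> norm (G y - G x) \<le> e"
    and a: "a \<in> cball x r" and b: "b \<in> cball x r"
  shows "\<bar>f b - f a - G x \<bullet> (b - a)\<bar> \<le> norm (b - a) * e"
proof -
  have x: "x \<in> cball x r" using a by (simp add: dist_norm) (meson dual_order.trans norm_ge_zero)
  have S: "a + t *\<^sub>R (b - a) \<in> cball x r" if "t \<in> {0..1}" for t
  proof -
    have "(1 - t) *\<^sub>R a + t *\<^sub>R b \<in> cball x r"
      using convexD[OF convex_cball[of x r] a b, of "1 - t" t] that by simp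
    moreover have "(1 - t) *\<^sub>R a + t *\<^sub>R b = a + t *\<^sub>R (b - a)"
      by (simp add: algebra_simps)
    ultimately show ?thesis by simp
  qed
  have "onorm ((\<lambda>v. G y \<bullet> v) - (\<lambda>v. G x \<bullet> v)) \<le> e" if "y \<in> cball x r" for y
  proof (rule onorm_le)
    fix v
    have "norm (((\<lambda>v. G y \<bullet> v) - (\<lambda>v. G x \<bullet> v)) v) = \<bar>(G y - G x) \<bullet> v\<bar>"
      by (simp add: inner_diff_left)
    also have "\<dots> \<le> norm (G y - G x) * norm v" by (rule Cauchy_Schwarz_ineq2)
    also have "\<dots> \<le> e * norm v" using bnd[OF that] by (simp add: mult_right_mono)
    finally show "norm (((\<lambda>v. G y \<bullet> v) - (\<lambda>v. G x \<bullet> v)) v) \<le> e * norm v" .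
  qed
  from differentiable_bound_linearization[of a b "cball x r" f "\<lambda>y v. G y \<bullet> v" x e, OF S
      has_derivative_at_withinI[OF der] this x]
  show ?thesis by simp
qed

theorem theorem2:
  fixes f :: "real ^ 'n \<Rightarrow> real" and M :: real and \<alpha> :: real
  assumes A1: "smooth_fun f"
    and A2: "M > 0" "\<forall>x. x \<notin> ball 0 M \<longrightarrow> f x > 0"
    and A3: "\<forall>p \<in> zero_set f. grad f p \<noteq> 0"
    and Bne: "zero_set f \<noteq> {}"
    and \<alpha>: "- (pi / 4) < \<alpha>" "\<alpha> < pi / 4"
  shows "\<exists>\<sigma>>0. \<forall>x \<in> Omega f \<sigma>.
           grad f x \<noteq> 0 \<and> Tset f x \<noteq> {} \<and>
           (\<exists>t. t \<in> Tset f x \<and> (\<forall>s \<in> Tset f x. t \<le> s) \<and>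
                dist_B f x \<le> t \<and> t \<le> 2 * cos \<alpha> * dist_B f x)"
proof -
  define G where "G = grad f"
  define B where "B = zero_set f"
  have der: "\<And>y. (f has_derivative (\<lambda>v. G y \<bullet> v)) (at y)"
    using grad_props(1)[OF A1] unfolding G_def .
  have contG: "continuous_on UNIV G" using grad_props(2)[OF A1] unfolding G_def .
  have contf: "continuous_on UNIV f"
    using der by (meson continuous_at_imp_continuous_on has_derivative_continuous)
  have cf: "\<And>y. isCont f y" using contf by (simp add: continuous_on_eq_continuous_at)
  have closedB: "closed B" unfolding B_def zero_set_def
    using closed_Collect_eq[OF contf continuous_on_const] .
  have Bsub: "B \<subseteq> ball 0 M" using A2(2) unfolding B_def zero_set_def by force
  have compB: "compact B" using closedB Bsub
    by (meson bounded_ball bounded_subset compact_eq_bounded_closed)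
  obtain p0 where p0: "p0 \<in> B" "\<And>y. y \<in> B \<Longrightarrow> norm (G p0) \<le> norm (G y)"
    using continuous_attains_inf[OF compB Bne[folded B_def], of "\<lambda>y. norm (G y)"]
      continuous_on_subset[OF contG] by (metis continuous_on_norm subset_UNIV)
  define m0 where "m0 = norm (G p0)"
  have m0: "m0 > 0" using A3 p0 unfolding m0_def B_def G_def by auto
  define K where "K = cball (0::real^'n) (M + 1)"
  have ucK: "uniformly_continuous_on K G"
    unfolding K_def by (rule compact_uniformly_continuous[OF continuous_on_subset[OF contG]]) auto
  define c where "c = 2 * cos \<alpha>"
  have "cos (pi/3) < cos \<bar>\<alpha>\<bar>"
    by (rule cos_monotone_0_pi) (use \<alpha> in auto)
  then have c1: "c > 1" unfolding c_def by (simp add: cos_60)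
  define \<epsilon> where "\<epsilon> = (c - 1) * (m0/2) / (2 * (1 + c))"
  have \<epsilon>: "\<epsilon> > 0" unfolding \<epsilon>_def using c1 m0 by simp
  obtain \<delta>1 where \<delta>1: "\<delta>1 > 0" "\<And>x y. x \<in> K \<Longrightarrow> y \<in> K \<Longrightarrow> dist y x < \<delta>1 \<Longrightarrow> dist (G y) (G x) < m0/2"
    using ucK m0 unfolding uniformly_continuous_on_def by (metis half_gt_zero)
  obtain \<delta>2 where \<delta>2: "\<delta>2 > 0" "\<And>x y. x \<in> K \<Longrightarrow> y \<in> K \<Longrightarrow> dist y x < \<delta>2 \<Longrightarrow> dist (G y) (G x) < \<epsilon>"
    using ucK \<epsilon> unfolding uniformly_continuous_on_def by metis
  define \<sigma> where "\<sigma> = min \<delta>1 (min (\<delta>2/(c+1)) (1/(c+1)))"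
  have \<sigma>: "\<sigma> > 0" unfolding \<sigma>_def using \<delta>1 \<delta>2 c1 by auto
  show ?thesis
  proof (rule exI[of _ \<sigma>], rule conjI[OF \<sigma>], rule ballI)
    fix x assume "x \<in> Omega f \<sigma>"
    then have dx: "infdist x B < \<sigma>" unfolding Omega_def dist_B_def B_def by simp
    define d where "d = infdist x B"
    obtain p where p: "p \<in> B" "\<And>y. y \<in> B \<Longrightarrow> dist x p \<le> dist x y"
      using distance_attains_inf[OF closedB Bne[folded B_def]] by metis
    have dp: "d = dist x p"
    proof (rule antisym)
      show "d \<le> dist x p" unfolding d_def by (rule infdist_le[OF p(1)])
      show "dist x p \<le> d" unfolding d_def infdist_notempty[OF Bne[folded B_def]]
        by (rule cINF_greatest) (use p Bne B_def in auto)
    qed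
    have d0: "d \<ge> 0" unfolding d_def by (rule infdist_nonneg)
    have dlt: "d < \<sigma>" using dx d_def by simp
    have pM: "norm p < M" using p(1) Bsub by auto
    have npx: "norm (x - p) = d" using dp by (simp add: dist_norm)
    have xnorm: "norm x \<le> norm p + d"
      using norm_triangle_ineq[of p "x - p"] npx by simp
    have c1d: "(c + 1) * d < 1" "(c+1) * d < \<delta>2"
      using dlt c1 unfolding \<sigma>_def by (auto simp: field_simps)
    have dcd: "d \<le> (c+1) * d" "c * d \<le> (c+1) * d" using d0 c1 by (simp_all add: algebra_simps)
    have pK: "p \<in> K" using pM unfolding K_def by simp
    have xK: "x \<in> K" using pM xnorm c1d dcd unfolding K_def
      by simp
    have "dist x p < \<delta>1" using dp dlt unfolding \<sigma>_def by simp
    then have "dist (G x) (G p) < m0/2" using \<delta>1(2)[OF pK xK] by simp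
    moreover have "norm (G p) \<ge> m0" using p0(2)[OF p(1)] unfolding m0_def .
    ultimately have Gx: "norm (G x) > m0/2"
      using norm_triangle_ineq2[of "G p" "G x"] by (simp add: dist_norm norm_minus_commute)
    have Gx0: "grad f x \<noteq> 0" using Gx m0 unfolding G_def by auto
    have Gxn: "G x \<noteq> 0" using Gx0 unfolding G_def .
    show "grad f x \<noteq> 0 \<and> Tset f x \<noteq> {} \<and>
           (\<exists>t. t \<in> Tset f x \<and> (\<forall>s \<in> Tset f x. t \<le> s) \<and>
                dist_B f x \<le> t \<and> t \<le> 2 * cos \<alpha> * dist_B f x)"
    proof (cases "f x = 0")
      case True
      then have "Tset f x = {0..}" unfolding Tset_def zero_set_def by auto
      moreover have "dist_B f x = 0" unfolding dist_B_def using True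
        by (simp add: zero_set_def)
      ultimately show ?thesis using Gx0 by auto
    next
      case False
      define s where "s = sgn (f x)"
      have s: "s = 1 \<or> s = -1" "s * f x > 0" "s * s = 1"
        using False unfolding s_def by (auto simp: sgn_if)
      define u where "u = (1 / norm (G x)) *\<^sub>R G x"
      define w where "w = s *\<^sub>R u"
      have nu: "norm u = 1" using Gxn unfolding u_def by simp
      have nw: "norm w = 1" using s nu unfolding w_def by auto
      have Gw: "G x \<bullet> w = s * norm (G x)" unfolding w_def u_def using Gxn
        by (simp add: dot_square_norm power2_eq_square)
      have ball_bnd: "norm (G y - G x) \<le> \<epsilon>" if "y \<in> cball x (c * d)" for y
      proof -
        have "norm (y - x) \<le> c * d" using that by (simp add: dist_norm norm_minus_commute)
        have "norm y \<le> norm x + c * d"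
          using norm_triangle_ineq[of x "y - x"] \<open>norm (y - x) \<le> c * d\<close> by simp
        then have yK: "y \<in> K" using xnorm pM c1d unfolding K_def by (simp add: algebra_simps)
        have "c * d < \<delta>2" using c1d dcd by linarith
        then have "dist y x < \<delta>2" using \<open>norm (y - x) \<le> c * d\<close> by (simp add: dist_norm)
        from \<delta>2(2)[OF xK yK this] show ?thesis by (simp add: dist_norm)
      qed
      have xin: "x \<in> cball x (c * d)" using c1 d0 by simp
      have yin: "x - (c * d) *\<^sub>R w \<in> cball x (c * d)" using nw c1 d0 by (simp add: dist_norm)
      have pin: "p \<in> cball x (c * d)" using dp c1 d0
        using mult_right_mono[of 1 c d] by (simp add: dist_norm)
      have e1: "\<bar>f (x - (c * d) *\<^sub>R w) - f x - G x \<bullet> ((x - (c * d) *\<^sub>R w) - x)\<bar>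
          \<le> norm ((x - (c * d) *\<^sub>R w) - x) * \<epsilon>"
        by (rule lin_est[OF der ball_bnd xin yin])
      have e2: "\<bar>f x - f p - G x \<bullet> (x - p)\<bar> \<le> norm (x - p) * \<epsilon>"
        by (rule lin_est[OF der ball_bnd pin xin])
      have fp: "f p = 0" using p(1) unfolding B_def zero_set_def by simp
      have e1': "\<bar>f (x - (c * d) *\<^sub>R w) - f x + c * d * (s * norm (G x))\<bar> \<le> c * d * \<epsilon>"
      proof -
        have "(x - (c * d) *\<^sub>R w) - x = -((c * d) *\<^sub>R w)" by simp
        then have A: "G x \<bullet> ((x - (c * d) *\<^sub>R w) - x) = - (c * d * (s * norm (G x)))" using Gw by simp
        have N: "norm ((x - (c * d) *\<^sub>R w) - x) = c * d" using nw c1 d0 by simp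
        show ?thesis using e1[unfolded A N] by simp
      qed
      have e2': "\<bar>f x - G x \<bullet> (x - p)\<bar> \<le> d * \<epsilon>" using e2 fp npx by simp
      have cs: "\<bar>G x \<bullet> (x - p)\<bar> \<le> norm (G x) * d"
        using Cauchy_Schwarz_ineq2[of "G x" "x - p"] npx by simp
      have key: "(1 + c) * \<epsilon> \<le> (c - 1) * norm (G x)"
      proof -
        have "(1 + c) * \<epsilon> = (c - 1) * (m0/2) / 2" unfolding \<epsilon>_def using c1 by (simp add: field_simps)
        also have "\<dots> = (c - 1) * (m0/2/2)" by simp
        also have "\<dots> \<le> (c - 1) * norm (G x)" using c1 Gx m0 by (intro mult_left_mono) auto
        finally show ?thesis .
      qed
      have key2: "(1 + c) * \<epsilon> * d \<le> (c - 1) * norm (G x) * d"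
        using mult_right_mono[OF key d0] .
      define h where "h t = s * f (x - t *\<^sub>R w)" for t
      have h0: "h 0 \<ge> 0" using s unfolding h_def by simp
      have hcd: "h (c * d) \<le> 0"
      proof -
        have "s * f (x - (c * d) *\<^sub>R w) \<le> \<bar>f x - G x \<bullet> (x - p)\<bar> + \<bar>G x \<bullet> (x - p)\<bar> - c * d * norm (G x) + c * d * \<epsilon>"
        proof -
          have tri: "\<bar>f x\<bar> \<le> \<bar>f x - G x \<bullet> (x - p)\<bar> + \<bar>G x \<bullet> (x - p)\<bar>"
            using abs_triangle_ineq[of "f x - G x \<bullet> (x - p)" "G x \<bullet> (x - p)"] by simp
          from s(1) show ?thesis
          proof
            assume "s = 1" then show ?thesis using e1' tri by (simp add: abs_le_iff)
          next
            assume "s = -1" then show ?thesis using e1' tri by (simp add: abs_le_iff)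
          qed
        qed
        also have "\<dots> \<le> d * \<epsilon> + norm (G x) * d - c * d * norm (G x) + c * d * \<epsilon>"
          using e2' cs by simp
        also have "\<dots> \<le> 0" using key2 by (simp add: algebra_simps)
        finally show ?thesis unfolding h_def .
      qed
      have conth: "isCont h t" for t unfolding h_def
      proof -
        have "isCont (\<lambda>t. f (x - t *\<^sub>R w)) t" by (rule isCont_o2[where g=f, OF _ cf]) (intro continuous_intros)
        then show "isCont (\<lambda>t. s * f (x - t *\<^sub>R w)) t" by (intro continuous_intros)
      qed
      obtain t0 where t0: "0 \<le> t0" "t0 \<le> c * d" "h t0 = 0"
        using IVT2[of h "c * d" 0 0] hcd h0 c1 d0 conth by auto
      have Teq: "Tset f x = {t. t \<ge> 0 \<and> f (x - t *\<^sub>R w) = 0}"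
        unfolding Tset_def zero_set_def w_def u_def s_def G_def by (simp add: mult.commute)
      have t0T: "t0 \<in> Tset f x" using t0 s unfolding Teq h_def by auto
      have closedT: "closed (Tset f x)" unfolding Teq
        by (intro closed_Collect_conj closed_Collect_le closed_Collect_eq continuous_intros
           continuous_at_imp_continuous_on ballI isCont_o2[where g=f, OF _ cf])
      have bddT: "bdd_below (Tset f x)" unfolding Teq by (auto intro: bdd_belowI[of _ 0])
      define T where "T = Inf (Tset f x)"
      have TT: "T \<in> Tset f x" unfolding T_def
        using closed_contains_Inf[OF _ bddT closedT] t0T by auto
      have Tmin: "\<forall>s' \<in> Tset f x. T \<le> s'" unfolding T_def using bddT by (auto intro: cInf_lower)
      have "T \<le> t0" using Tmin t0T by auto
      have dT: "d \<le> T"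
      proof -
        have "x - T *\<^sub>R w \<in> B" using TT unfolding Teq B_def zero_set_def by simp
        then have "d \<le> dist x (x - T *\<^sub>R w)" unfolding d_def by (rule infdist_le)
        also have "\<dots> = T" using nw TT unfolding Teq by (simp add: dist_norm)
        finally show ?thesis .
      qed
      have "dist_B f x = d" unfolding dist_B_def d_def B_def ..
      then show ?thesis using Gx0 TT Tmin dT \<open>T \<le> t0\<close> t0 unfolding c_def by auto
    qed
  qed
qed

end
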